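(* Let $S\ge 2$, $\mathcal S=\{1,\dots,S\}$ and $T=3$. The union of the following two sets of moves is a Markov basis for the toric homogeneous Markov chain model on $\mathcal S^3$. (1) Crossing path swappings: for paths $\omega=(s_1,s_2,s_3)$, $\omega'=(s'_1,s'_2,s'_3)$ with $s_t=s'_t$ for some $t$, the move $e_\omega+e_{\omega'}-e_{\tilde\omega}-e_{\tilde\omega'}$ with $\tilde\omega=(s_1,\dots,s_t,s'_{t+1},\dots,s'_3)$, $\tilde\omega'=(s'_1,\dots,s'_t,s_{t+1},\dots,s_3)$. (2) $m$ by $m$ permutations $\mathcal Z(i_1,\dots,i_m;j_1,\dots,j_m)$, for all $m=2,\dots,S$, all distinct $i_1,\dots,i_m\in\mathcal S$ and all distinct $j_1,\dots,j_m\in\mathcal S$: setting $j_0:=j_m$, for arbitrary states $a_1,\dots,a_m,b_1,\dots,b_m\in\mathcal S$ these are the moves $$\sum_{l=1}^m\Big(e_{(i_l,j_l,a_l)}+e_{(b_l,i_l,j_{l-1})}-e_{(i_l,j_{l-1},a_{\sigma(l)})}-e_{(b_l,i_l,j_l)}\Big),$$ where $\sigma(l)=l-1$ for $l\ge2$ and $\sigma(1)=m$. In words: the transitions $i_1\to j_1,\dots,i_m\to j_m$ at time $1$ are exchanged with the transitions $i_1\to j_m, i_2\to j_1,\dots,i_m\to j_{m-1}$ at time $2$.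
   Context: Paths are elements $\omega=(\omega_1,\omega_2,\omega_3)$ of $\mathcal S^3$; a contingency table is a function $\mathbf x:\mathcal S^3\to\mathbb Z_{\ge 0}$, and $e_\omega$ denotes the table with a single path $\omega$. The toric homogeneous Markov chain (THMC) model assigns $p(\omega)=c\,\gamma_{\omega_1}\beta_{\omega_1\omega_2}\beta_{\omega_2\omega_3}$ with free nonnegative parameters; its sufficient statistic for a table $\mathbf x$ is $\mathbf b(\mathbf x)=A\mathbf x$ consisting of the initial-state counts $x^1_i=\sum_{\omega:\omega_1=i}x(\omega)$ and the total transition counts $x^+_{ij}=\sum_\omega x(\omega)\,\#\{t\in\{1,2\}:\omega_t=i,\omega_{t+1}=j\}$. The fiber of $\mathbf b$ is $\{\mathbf x\ge 0 \text{ integer}: A\mathbf x=\mathbf b\}$. A move is an integer function $\mathbf z$ with $A\mathbf z=0$. A set $\mathcal B$ of moves is a Markov basis if for every $\mathbf b$ and every $\mathbf x,\mathbf y$ in the fiber of $\mathbf b$ there are $\mathbf z_1,\dots,\mathbf z_K\in\mathcal B\cup(-\mathcal B)$ with $\mathbf y=\mathbf x+\sum_{k}\mathbf z_k$ and all partial sums $\mathbf x+\sum_{k\le h}\mathbf z_k\ge0$. *)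

theory Defs
  imports Main
begin

type_synonym path = "nat \<times> nat \<times> nat"
type_synonym table = "path \<Rightarrow> int"

definition states :: "nat \<Rightarrow> nat set" where
  "states S = {1..S}"

definition paths :: "nat \<Rightarrow> path set" where
  "paths S = states S \<times> states S \<times> states S"

fun pcomp :: "path \<Rightarrow> nat \<Rightarrow> nat" where
  "pcomp (a, b, c) t = (if t = 1 then a else if t = 2 then b else c)"

definition e :: "path \<Rightarrow> table" where
  "e w = (\<lambda>v. if v = w then 1 else 0)"

text \<open>Sufficient statistic: initial-state counts and total transition counts.\<close>
definition init_count :: "nat \<Rightarrow> table \<Rightarrow> nat \<Rightarrow> int" where
  "init_count S x i = (\<Sum>w\<in>{w\<in>paths S. pcomp w 1 = i}. x w)"

definition trans_count :: "nat \<Rightarrow> table \<Rightarrow> nat \<Rightarrow> nat \<Rightarrow> int" where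
  "trans_count S x i j =
     (\<Sum>w\<in>paths S. x w * int (card {t\<in>{1,2}. pcomp w t = i \<and> pcomp w (t+1) = j}))"

definition same_stat :: "nat \<Rightarrow> table \<Rightarrow> table \<Rightarrow> bool" where
  "same_stat S x y \<longleftrightarrow>
     (\<forall>i\<in>states S. init_count S x i = init_count S y i) \<and>
     (\<forall>i\<in>states S. \<forall>j\<in>states S. trans_count S x i j = trans_count S y i j)"

definition supported :: "nat \<Rightarrow> table \<Rightarrow> bool" where
  "supported S x \<longleftrightarrow> (\<forall>w. w \<notin> paths S \<longrightarrow> x w = 0)"

definition cont_table :: "nat \<Rightarrow> table \<Rightarrow> bool" where
  "cont_table S x \<longleftrightarrow> supported S x \<and> (\<forall>w. 0 \<le> x w)"

definition is_move :: "nat \<Rightarrow> table \<Rightarrow> bool" where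
  "is_move S z \<longleftrightarrow> supported S z \<and> same_stat S z (\<lambda>_. 0)"

definition markov_basis :: "nat \<Rightarrow> table set \<Rightarrow> bool" where
  "markov_basis S B \<longleftrightarrow>
     (\<forall>z\<in>B. is_move S z) \<and>
     (\<forall>x y. cont_table S x \<and> cont_table S y \<and> same_stat S x y \<longrightarrow>
        (\<exists>zs. set zs \<subseteq> B \<union> (\<lambda>z. (\<lambda>w. - z w)) ` B \<and>
              (\<forall>w. y w = x w + (\<Sum>k<length zs. (zs ! k) w)) \<and>
              (\<forall>h\<le>length zs. \<forall>w. 0 \<le> x w + (\<Sum>k<h. (zs ! k) w))))"

definition swap_path :: "nat \<Rightarrow> path \<Rightarrow> path \<Rightarrow> path" where
  "swap_path t w w' =
     (let c = (\<lambda>k. if k \<le> t then pcomp w k else pcomp w' k) in (c 1, c 2, c 3))"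

definition crossing_swaps :: "nat \<Rightarrow> table set" where
  "crossing_swaps S = {(\<lambda>v. e w v + e w' v - e (swap_path t w w') v - e (swap_path t w' w) v)
     | w w' t. w \<in> paths S \<and> w' \<in> paths S \<and> t \<in> {1,2,3} \<and> pcomp w t = pcomp w' t}"

definition perm_move :: "nat \<Rightarrow> (nat \<Rightarrow> nat) \<Rightarrow> (nat \<Rightarrow> nat) \<Rightarrow> (nat \<Rightarrow> nat) \<Rightarrow> (nat \<Rightarrow> nat) \<Rightarrow> table" where
  "perm_move m i j a b =
     (let jprev = (\<lambda>l. if l = 1 then j m else j (l - 1));
          sig = (\<lambda>l. if l = 1 then m else l - 1)
      in (\<lambda>v. \<Sum>l\<in>{1..m}. e (i l, j l, a l) v + e (b l, i l, jprev l) v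
                          - e (i l, jprev l, a (sig l)) v - e (b l, i l, j l) v))"

definition perm_moves :: "nat \<Rightarrow> table set" where
  "perm_moves S = {perm_move m i j a b | m i j a b.
     2 \<le> m \<and> m \<le> S \<and>
     inj_on i {1..m} \<and> i ` {1..m} \<subseteq> states S \<and>
     inj_on j {1..m} \<and> j ` {1..m} \<subseteq> states S \<and>
     a ` {1..m} \<subseteq> states S \<and> b ` {1..m} \<subseteq> states S}"

end

theory Submission
  imports Defs
begin


inductive reach :: "table set \<Rightarrow> table \<Rightarrow> table \<Rightarrow> bool" for M where
  rrefl: "(\<forall>w. 0 \<le> x w) \<Longrightarrow> reach M x x"
| rstep: "z \<in> M \<Longrightarrow> (\<forall>w. 0 \<le> x w) \<Longrightarrow> (\<forall>w. 0 \<le> x w + z w) \<Longrightarrow> reach M (\<lambda>w. x w + z w) y \<Longrightarrow> reach M x y"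

lemma reach_nonneg: "reach M x y \<Longrightarrow> (\<forall>w. 0 \<le> x w) \<and> (\<forall>w. 0 \<le> y w)"
  by (induction rule: reach.induct) auto

lemma reach_list:
  assumes "reach M x y"
  shows "\<exists>zs. set zs \<subseteq> M \<and> (\<forall>w. y w = x w + (\<Sum>k<length zs. (zs ! k) w)) \<and>
              (\<forall>h\<le>length zs. \<forall>w. 0 \<le> x w + (\<Sum>k<h. (zs ! k) w))"
  using assms
proof (induction rule: reach.induct)
  case (rrefl x)
  then show ?case by (intro exI[of _ "[]"]) auto
next
  case (rstep z x y)
  then obtain zs where zs: "set zs \<subseteq> M" "\<forall>w. y w = x w + z w + (\<Sum>k<length zs. (zs ! k) w)"
    "\<forall>h\<le>length zs. \<forall>w. 0 \<le> x w + z w + (\<Sum>k<h. (zs ! k) w)" by auto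
  have sh: "(\<Sum>k<Suc h. ((z # zs) ! k) w) = z w + (\<Sum>k<h. (zs ! k) w)" for h w
    by (subst sum.lessThan_Suc_shift) simp
  show ?case
  proof (intro exI[of _ "z # zs"] conjI allI impI)
    show "set (z # zs) \<subseteq> M" using zs rstep by auto
    fix w have "y w = x w + z w + (\<Sum>k<length zs. (zs ! k) w)" using zs(2) by blast
    then show "y w = x w + (\<Sum>k<length (z # zs). ((z # zs) ! k) w)"
      by (simp only: length_Cons sh add.assoc)
  next
    fix h w assume "h \<le> length (z # zs)"
    then show "0 \<le> x w + (\<Sum>k<h. ((z # zs) ! k) w)"
    proof (cases h)
      case 0 have "0 \<le> x w" using rstep(2) by blast
      then show ?thesis using 0 by simp
    next
      case (Suc h') then have "h' \<le> length zs" using \<open>h \<le> _\<close> by simp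
      then have "0 \<le> x w + z w + (\<Sum>k<h'. (zs ! k) w)" using zs(3) by blast
      then show ?thesis using Suc by (simp only: sh add.assoc)
    qed
  qed
qed

lemma reach_trans: "reach M x y \<Longrightarrow> reach M y u \<Longrightarrow> reach M x u"
  by (induction rule: reach.induct) (auto intro: reach.rstep)

lemma reach_lift: "reach M x y \<Longrightarrow> (\<forall>w. 0 \<le> u w) \<Longrightarrow> reach M (\<lambda>w. x w + u w) (\<lambda>w. y w + u w)"
proof (induction rule: reach.induct)
  case (rrefl x) then show ?case by (intro reach.rrefl) (simp add: add_nonneg_nonneg)
next
  case (rstep z x y)
  have e: "(\<lambda>w. x w + u w + z w) = (\<lambda>w. x w + z w + u w)" by (simp add: algebra_simps)
  show ?case
    apply (rule reach.rstep[OF rstep(1)])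
    using rstep e by (auto simp: add_nonneg_nonneg algebra_simps)
qed

lemma reach_one: "z \<in> M \<Longrightarrow> (\<forall>w. 0 \<le> x w) \<Longrightarrow> (\<forall>w. 0 \<le> x w + z w) \<Longrightarrow> reach M x (\<lambda>w. x w + z w)"
  by (rule reach.rstep) (auto intro: reach.rrefl)

lemma reach_sym:
  assumes neg: "\<And>z. z \<in> M \<Longrightarrow> (\<lambda>w. - z w) \<in> M"
  shows "reach M x y \<Longrightarrow> reach M y x"
proof (induction rule: reach.induct)
  case (rrefl x) then show ?case by (rule reach.rrefl)
next
  case (rstep z x y)
  have "reach M (\<lambda>w. x w + z w) x"
    using reach_one[OF neg[OF rstep(1)], of "\<lambda>w. x w + z w"] rstep by simp
  then show ?case using rstep reach_trans by blast
qed



definition lin :: "nat \<Rightarrow> (path \<Rightarrow> int) \<Rightarrow> table \<Rightarrow> int" where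
  "lin S f x = (\<Sum>v\<in>paths S. x v * f v)"

definition ind1 :: "nat \<Rightarrow> nat \<Rightarrow> path \<Rightarrow> int" where
  "ind1 i j v = (if pcomp v 1 = i \<and> pcomp v 2 = j then 1 else 0)"
definition ind2 :: "nat \<Rightarrow> nat \<Rightarrow> path \<Rightarrow> int" where
  "ind2 i j v = (if pcomp v 2 = i \<and> pcomp v 3 = j then 1 else 0)"
definition indI :: "nat \<Rightarrow> path \<Rightarrow> int" where
  "indI i v = (if pcomp v 1 = i then 1 else 0)"

definition sg :: "nat \<Rightarrow> nat \<Rightarrow> nat" where "sg m l = (if l = 1 then m else l - 1)"

lemma pcomp_simps[simp]: "pcomp (a,b,c) 1 = a" "pcomp (a,b,c) 2 = b" "pcomp (a,b,c) 3 = c"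
  by auto

lemma finite_paths[simp]: "finite (paths S)"
  by (simp add: paths_def states_def)

lemma lin_add: "lin S f (\<lambda>v. x v + y v) = lin S f x + lin S f y"
  by (simp add: lin_def distrib_right sum.distrib)
lemma lin_diff: "lin S f (\<lambda>v. x v - y v) = lin S f x - lin S f y"
  by (simp add: lin_def left_diff_distrib sum_subtractf)
lemma lin_zero: "lin S f (\<lambda>v. 0) = 0"
  by (simp add: lin_def)
lemma lin_fadd: "lin S (\<lambda>v. f v + g v) x = lin S f x + lin S g x"
  by (simp add: lin_def distrib_left sum.distrib)
lemma lin_e: "w \<in> paths S \<Longrightarrow> lin S f (e w) = f w"
proof -
  assume w: "w \<in> paths S"
  have "lin S f (e w) = (\<Sum>v\<in>paths S. if v = w then f w else 0)"
    unfolding lin_def e_def by (rule sum.cong) auto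
  also have "\<dots> = f w" using w by simp
  finally show ?thesis .
qed
lemma lin_sum: "finite L \<Longrightarrow> lin S f (\<lambda>v. \<Sum>l\<in>L. g l v) = (\<Sum>l\<in>L. lin S f (g l))"
  unfolding lin_def by (simp add: sum_distrib_right sum.swap[of _ "paths S"])

lemma init_lin: "init_count S x i = lin S (indI i) x"
  unfolding init_count_def lin_def indI_def
  by (simp add: sum.inter_filter[symmetric] if_distrib cong: if_cong)

lemma card_ind: "int (card {t\<in>{1,2}. pcomp w t = i \<and> pcomp w (t+1) = j}) = ind1 i j w + ind2 i j w"
proof -
  obtain a b c where w: "w = (a,b,c)" by (cases w) auto
  have "{t\<in>{1::nat,2}. pcomp w t = i \<and> pcomp w (t+1) = j} =
        (if a = i \<and> b = j then {1} else {}) \<union> (if b = i \<and> c = j then {2} else {})"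
    using w by auto
  then show ?thesis using w by (auto simp: ind1_def ind2_def)
qed

lemma trans_lin: "trans_count S x i j = lin S (ind1 i j) x + lin S (ind2 i j) x"
  unfolding trans_count_def card_ind lin_def by (simp add: distrib_left sum.distrib)

lemma same_stat_lin: "same_stat S x y \<longleftrightarrow>
   (\<forall>i\<in>states S. lin S (indI i) x = lin S (indI i) y) \<and>
   (\<forall>i\<in>states S. \<forall>j\<in>states S. lin S (ind1 i j) x + lin S (ind2 i j) x = lin S (ind1 i j) y + lin S (ind2 i j) y)"
  unfolding same_stat_def init_lin trans_lin by simp

lemma is_move_lin: "is_move S z \<longleftrightarrow> supported S z \<and>
   (\<forall>i\<in>states S. lin S (indI i) z = 0) \<and>
   (\<forall>i\<in>states S. \<forall>j\<in>states S. lin S (ind1 i j) z + lin S (ind2 i j) z = 0)"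
  unfolding is_move_def same_stat_lin lin_zero by simp

lemma paths_mem[simp]: "(a,b,c) \<in> paths S \<longleftrightarrow> a \<in> states S \<and> b \<in> states S \<and> c \<in> states S"
  by (simp add: paths_def)

lemma swap_path_mem: "w \<in> paths S \<Longrightarrow> w' \<in> paths S \<Longrightarrow> swap_path t w w' \<in> paths S"
  by (cases w; cases w') (auto simp: swap_path_def Let_def)

lemma e_supp: "w \<in> paths S \<Longrightarrow> v \<notin> paths S \<Longrightarrow> e w v = 0"
  by (auto simp: e_def)

lemma crossing_is_move:
  assumes "z \<in> crossing_swaps S" shows "is_move S z"
proof -
  obtain w w' t where z: "z = (\<lambda>v. e w v + e w' v - e (swap_path t w w') v - e (swap_path t w' w) v)"
    and w: "w \<in> paths S" "w' \<in> paths S" and t: "t \<in> {1,2,3}" and c: "pcomp w t = pcomp w' t"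
    using assms unfolding crossing_swaps_def by blast
  obtain a b c where wa: "w = (a,b,c)" by (cases w) auto
  obtain a' b' c' where wb: "w' = (a',b',c')" by (cases w') auto
  have sw: "swap_path t w w' \<in> paths S" "swap_path t w' w \<in> paths S" using w swap_path_mem by auto
  have L: "lin S f z = f w + f w' - f (swap_path t w w') - f (swap_path t w' w)" for f
    unfolding z lin_diff lin_add lin_e[OF w(1)] lin_e[OF w(2)] lin_e[OF sw(1)] lin_e[OF sw(2)] ..
  have supp: "supported S z" unfolding supported_def z using w sw e_supp by auto
  show ?thesis unfolding is_move_lin L using supp t c wa wb
    by (auto simp: swap_path_def Let_def indI_def ind1_def ind2_def)
qed



lemma perm_move_alt: "perm_move m i j a b = (\<lambda>v. \<Sum>l\<in>{1..m}. e (i l, j l, a l) v + e (b l, i l, j (sg m l)) v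
    - e (i l, j (sg m l), a (sg m l)) v - e (b l, i l, j l) v)"
  unfolding perm_move_def Let_def sg_def
proof (intro ext sum.cong refl)
  fix v l show "e (i l, j l, a l) v + e (b l, i l, if l = 1 then j m else j (l - 1)) v -
      e (i l, if l = 1 then j m else j (l - 1), a (if l = 1 then m else l - 1)) v - e (b l, i l, j l) v =
      e (i l, j l, a l) v + e (b l, i l, j (if l = 1 then m else l - 1)) v -
      e (i l, j (if l = 1 then m else l - 1), a (if l = 1 then m else l - 1)) v - e (b l, i l, j l) v"
    by (cases "l = 1") simp_all
qed

lemma sg_bij: "1 \<le> m \<Longrightarrow> bij_betw (sg m) {1..m} {1..m}"
proof (rule bij_betw_imageI)
  assume m: "1 \<le> m"
  show "inj_on (sg m) {1..m}" unfolding inj_on_def sg_def by auto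
  show "sg m ` {1..m} = {1..m}"
  proof
    show "sg m ` {1..m} \<subseteq> {1..m}" using m by (auto simp: sg_def)
    show "{1..m} \<subseteq> sg m ` {1..m}"
    proof
      fix k assume k: "k \<in> {1..m}"
      show "k \<in> sg m ` {1..m}"
      proof (cases "k = m")
        case True then show ?thesis using m by (auto simp: sg_def intro!: image_eqI[of _ _ 1])
      next
        case False then show ?thesis using k by (auto simp: sg_def intro!: image_eqI[of _ _ "k+1"])
      qed
    qed
  qed
qed

lemma sg_mem: "1 \<le> m \<Longrightarrow> l \<in> {1..m} \<Longrightarrow> sg m l \<in> {1..m}"
  by (auto simp: sg_def)

lemma lin_perm:
  assumes m: "1 \<le> m" and r: "i ` {1..m} \<subseteq> states S" "j ` {1..m} \<subseteq> states S"
    "a ` {1..m} \<subseteq> states S" "b ` {1..m} \<subseteq> states S"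
  shows "lin S f (perm_move m i j a b) = (\<Sum>l\<in>{1..m}. f (i l, j l, a l) + f (b l, i l, j (sg m l))
    - f (i l, j (sg m l), a (sg m l)) - f (b l, i l, j l))"
proof -
  have st: "i l \<in> states S \<and> j l \<in> states S \<and> a l \<in> states S \<and> b l \<in> states S \<and> j (sg m l) \<in> states S \<and> a (sg m l) \<in> states S" if "l \<in> {1..m}" for l
    using r that sg_mem[OF m that] by auto
  show ?thesis unfolding perm_move_alt lin_sum[OF finite_atLeastAtMost] lin_add lin_diff
  proof (rule sum.cong[OF refl])
    fix l assume "l \<in> {1..m}" then show "lin S f (e (i l, j l, a l)) + lin S f (e (b l, i l, j (sg m l))) -
         lin S f (e (i l, j (sg m l), a (sg m l))) - lin S f (e (b l, i l, j l)) = f (i l, j l, a l) + f (b l, i l, j (sg m l))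
    - f (i l, j (sg m l), a (sg m l)) - f (b l, i l, j l)" using st by (simp add: lin_e)
  qed
qed

lemma e_supp': "v \<notin> paths S \<Longrightarrow> a \<in> states S \<Longrightarrow> b \<in> states S \<Longrightarrow> c \<in> states S \<Longrightarrow> e (a,b,c) v = 0"
  by (auto simp: e_def)

lemma perm_supported:
  assumes m: "1 \<le> m" and r: "i ` {1..m} \<subseteq> states S" "j ` {1..m} \<subseteq> states S"
    "a ` {1..m} \<subseteq> states S" "b ` {1..m} \<subseteq> states S"
  shows "supported S (perm_move m i j a b)"
  unfolding supported_def perm_move_alt
proof (intro allI impI)
  fix v assume v: "v \<notin> paths S"
  have st: "i l \<in> states S \<and> j l \<in> states S \<and> a l \<in> states S \<and> b l \<in> states S \<and> j (sg m l) \<in> states S \<and> a (sg m l) \<in> states S" if "l \<in> {1..m}" for l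
    using r that sg_mem[OF m that] by auto
  show "(\<Sum>l\<in>{1..m}. e (i l, j l, a l) v + e (b l, i l, j (sg m l)) v - e (i l, j (sg m l), a (sg m l)) v -
               e (b l, i l, j l) v) = 0"
  proof (rule sum.neutral, rule ballI)
    fix l assume "l \<in> {1..m}" then show "e (i l, j l, a l) v + e (b l, i l, j (sg m l)) v - e (i l, j (sg m l), a (sg m l)) v -
               e (b l, i l, j l) v = 0"
    proof -
      from st[OF \<open>l \<in> _\<close>] have "e (i l, j l, a l) v = 0" "e (b l, i l, j (sg m l)) v = 0"
        "e (i l, j (sg m l), a (sg m l)) v = 0" "e (b l, i l, j l) v = 0"
        by (blast intro: e_supp'[OF v])+
      then show ?thesis by simp
    qed
  qed
qed

lemma perm_is_move:
  assumes "z \<in> perm_moves S" shows "is_move S z"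
proof -
  obtain m i j a b where H: "z = perm_move m i j a b \<and> 2 \<le> m \<and> m \<le> S \<and>
     inj_on i {1..m} \<and> i ` {1..m} \<subseteq> states S \<and>
     inj_on j {1..m} \<and> j ` {1..m} \<subseteq> states S \<and>
     a ` {1..m} \<subseteq> states S \<and> b ` {1..m} \<subseteq> states S"
    using assms unfolding perm_moves_def mem_Collect_eq by (elim exE) (rule that)
  then have z: "z = perm_move m i j a b" and m: "2 \<le> m"
    and r: "i ` {1..m} \<subseteq> states S" "j ` {1..m} \<subseteq> states S"
    "a ` {1..m} \<subseteq> states S" "b ` {1..m} \<subseteq> states S" by auto
  have m1: "1 \<le> m" using m by simp
  note L = lin_perm[OF m1 r]
  have I: "lin S (indI k) z = 0" for k
    unfolding z L by (rule sum.neutral) (simp add: indI_def)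
  have T: "lin S (ind1 p q) z + lin S (ind2 p q) z = 0" for p q
  proof -
    define G where "G l = (if j l = p \<and> a l = q then 1 else (0::int))" for l
    have "lin S (ind1 p q) z + lin S (ind2 p q) z = lin S (\<lambda>v. ind1 p q v + ind2 p q v) z"
      by (simp add: lin_fadd)
    also have "\<dots> = (\<Sum>l\<in>{1..m}. G l - G (sg m l))"
      unfolding z L by (rule sum.cong[OF refl]) (simp add: ind1_def ind2_def G_def)
    also have "\<dots> = (\<Sum>l\<in>{1..m}. G l) - (\<Sum>l\<in>{1..m}. G (sg m l))"
      by (simp add: sum_subtractf)
    also have "(\<Sum>l\<in>{1..m}. G (sg m l)) = (\<Sum>l\<in>{1..m}. G l)"
      using sum.reindex_bij_betw[OF sg_bij[OF m1], of G] by simp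
    finally show ?thesis by simp
  qed
  show ?thesis unfolding is_move_lin using I T perm_supported[OF m1 r] z by simp
qed



declare split_paired_All[simp del] split_paired_Ex[simp del]

definition BB :: "nat \<Rightarrow> table set" where
  "BB S = (crossing_swaps S \<union> perm_moves S) \<union> (\<lambda>z. (\<lambda>w. - z w)) ` (crossing_swaps S \<union> perm_moves S)"

lemma lin_cong: "(\<And>v. v \<in> paths S \<Longrightarrow> f v = g v) \<Longrightarrow> lin S f x = lin S g x"
  unfolding lin_def by (rule sum.cong) auto

lemma lin_fsum: "finite K \<Longrightarrow> lin S (\<lambda>v. \<Sum>k\<in>K. f k v) x = (\<Sum>k\<in>K. lin S (f k) x)"
  unfolding lin_def by (simp add: sum_distrib_left sum.swap[of _ K])

lemma lin_nonneg: "(\<forall>w. 0 \<le> x w) \<Longrightarrow> (\<forall>v. 0 \<le> f v) \<Longrightarrow> 0 \<le> lin S f x"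
  unfolding lin_def by (rule sum_nonneg) (simp add: mult_nonneg_nonneg)

lemma lin_witness: "0 < lin S f x \<Longrightarrow> \<exists>v\<in>paths S. 0 < x v * f v"
proof (rule ccontr)
  assume "0 < lin S f x" "\<not> (\<exists>v\<in>paths S. 0 < x v * f v)"
  then have "lin S f x \<le> 0" unfolding lin_def by (intro sum_nonpos) auto
  then show False using \<open>0 < lin S f x\<close> by simp
qed

lemma lin_ge: "(\<forall>w. 0 \<le> x w) \<Longrightarrow> (\<forall>v. 0 \<le> f v) \<Longrightarrow> q \<in> paths S \<Longrightarrow> x q * f q \<le> lin S f x"
  unfolding lin_def by (rule member_le_sum) auto

lemma ind_nonneg: "0 \<le> ind1 i j v" "0 \<le> ind2 i j v" "0 \<le> indI i v"
  by (auto simp: ind1_def ind2_def indI_def)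

lemma states_fin[simp]: "finite (states S)" by (simp add: states_def)

lemma row_ind1: "i \<in> states S \<Longrightarrow> v \<in> paths S \<Longrightarrow> (\<Sum>j\<in>states S. ind1 i j v) = indI i v"
proof -
  assume v: "v \<in> paths S"
  obtain a b c where vv: "v = (a,b,c)" by (cases v) auto
  have b: "b \<in> states S" using v vv by simp
  have "(\<Sum>j\<in>states S. ind1 i j v) = (\<Sum>j\<in>states S. if j = b then (if a = i then 1 else 0) else 0)"
    unfolding vv ind1_def by (rule sum.cong) auto
  also have "\<dots> = indI i v" using b vv by (simp add: indI_def)
  finally show ?thesis .
qed

lemma col_ind: "v \<in> paths S \<Longrightarrow> (\<Sum>i\<in>states S. ind1 i j v) = (\<Sum>k\<in>states S. ind2 j k v)"
proof -
  assume v: "v \<in> paths S"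
  obtain a b c where vv: "v = (a,b,c)" by (cases v) auto
  have a: "a \<in> states S" "c \<in> states S" using v vv by auto
  have "(\<Sum>i\<in>states S. ind1 i j v) = (\<Sum>i\<in>states S. if i = a then (if b = j then 1 else 0) else 0)"
    unfolding vv ind1_def by (rule sum.cong) auto
  also have "\<dots> = (if b = j then 1 else 0)" using a by simp
  also have "\<dots> = (\<Sum>k\<in>states S. if k = c then (if b = j then 1 else 0) else 0)" using a by simp
  also have "\<dots> = (\<Sum>k\<in>states S. ind2 j k v)"
    unfolding vv ind2_def by (rule sum.cong) auto
  finally show ?thesis .
qed

lemma tot_ind: "v \<in> paths S \<Longrightarrow> (\<Sum>i\<in>states S. \<Sum>j\<in>states S. ind1 i j v) = 1"
proof -
  assume v: "v \<in> paths S"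
  obtain a b c where vv: "v = (a,b,c)" by (cases v) auto
  have a: "a \<in> states S" "b \<in> states S" using v vv by auto
  have "(\<Sum>i\<in>states S. \<Sum>j\<in>states S. ind1 i j v) = (\<Sum>i\<in>states S. indI i v)"
    using row_ind1 v by simp
  also have "\<dots> = (\<Sum>i\<in>states S. if i = a then 1 else 0)"
    unfolding vv indI_def by (rule sum.cong) auto
  also have "\<dots> = 1" using a by simp
  finally show ?thesis .
qed

lemma deg_m1: "lin S (\<lambda>_. 1) x = (\<Sum>i\<in>states S. \<Sum>j\<in>states S. lin S (ind1 i j) x)"
proof -
  have "lin S (\<lambda>_. 1) x = lin S (\<lambda>v. \<Sum>i\<in>states S. \<Sum>j\<in>states S. ind1 i j v) x"
    by (rule lin_cong) (simp add: tot_ind)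
  also have "\<dots> = (\<Sum>i\<in>states S. \<Sum>j\<in>states S. lin S (ind1 i j) x)"
    by (simp add: lin_fsum)
  finally show ?thesis .
qed

lemma cont_zero: "cont_table S x \<Longrightarrow> lin S (\<lambda>_. 1) x = 0 \<Longrightarrow> x = (\<lambda>_. 0)"
proof (rule ext)
  fix w assume c: "cont_table S x" and d: "lin S (\<lambda>_. 1) x = 0"
  show "x w = 0"
  proof (cases "w \<in> paths S")
    case True
    have "\<forall>v\<in>paths S. x v = 0" using d c unfolding lin_def cont_table_def
      by (subst sum_nonneg_eq_0_iff[symmetric]) auto
    then show ?thesis using True by simp
  next
    case False then show ?thesis using c unfolding cont_table_def supported_def by simp
  qed
qed



lemma lin_neg: "lin S f (\<lambda>v. - x v) = - lin S f x"
  by (simp add: lin_def sum_negf)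

lemma e_nonneg: "0 \<le> e w v" by (simp add: e_def)

lemma e_supported: "q \<in> paths S \<Longrightarrow> supported S (e q)"
  by (auto simp: supported_def e_def)

lemma m_eq_deg:
  assumes "\<forall>i\<in>states S. \<forall>j\<in>states S. lin S (ind1 i j) x = lin S (ind1 i j) y"
  shows "lin S (\<lambda>_. 1) x = lin S (\<lambda>_. 1) y"
  unfolding deg_m1 using assms by simp

lemma stageB:
  "\<And>x y. cont_table S x \<Longrightarrow> cont_table S y \<Longrightarrow>
   (\<forall>i\<in>states S. \<forall>j\<in>states S. lin S (ind1 i j) x = lin S (ind1 i j) y \<and> lin S (ind2 i j) x = lin S (ind2 i j) y) \<Longrightarrow>
   nat (lin S (\<lambda>_. 1) x) = n \<Longrightarrow> reach (BB S) x y"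
proof (induction n)
  case (0 x y)
  have dx: "lin S (\<lambda>_. 1) x = 0" using 0 lin_nonneg[of x "\<lambda>_. 1" S] unfolding cont_table_def by simp
  have dy: "lin S (\<lambda>_. 1) y = 0" using dx m_eq_deg[of S x y] 0 by simp
  have "x = (\<lambda>_. 0)" "y = (\<lambda>_. 0)" using cont_zero[OF 0(1) dx] cont_zero[OF 0(2) dy] by auto
  then show ?case by (auto intro: reach.rrefl)
next
  case (Suc n x y)
  have xn: "\<forall>s. 0 \<le> x s" and yn: "\<forall>s. 0 \<le> y s" using Suc unfolding cont_table_def by auto
  have degxy: "lin S (\<lambda>_. 1) x = lin S (\<lambda>_. 1) y" using m_eq_deg[of S x y] Suc(4) by simp
  then have "0 < lin S (\<lambda>_. 1) y" using Suc(5) by simp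
  then obtain q where q: "q \<in> paths S" "0 < y q" using lin_witness by fastforce
  obtain u v w where qq: "q = (u,v,w)" by (cases q) auto
  have st: "u \<in> states S" "v \<in> states S" "w \<in> states S" using q qq by auto
  have "y q * ind1 u v q \<le> lin S (ind1 u v) y" by (rule lin_ge) (auto simp: yn q ind_nonneg)
  moreover have "lin S (ind1 u v) x = lin S (ind1 u v) y" using Suc(4) st by blast
  moreover have "ind1 u v q = 1" by (simp add: qq ind1_def)
  ultimately have "0 < lin S (ind1 u v) x" using q(2) by simp
  then obtain p where p: "p \<in> paths S" "0 < x p * ind1 u v p" using lin_witness by blast
  obtain c where pp: "p = (u,v,c)" and c: "c \<in> states S" "0 < x p"
    using p by (cases p) (auto simp: ind1_def split: if_splits)
  have "y q * ind2 v w q \<le> lin S (ind2 v w) y" by (rule lin_ge) (auto simp: yn q ind_nonneg)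
  moreover have "lin S (ind2 v w) x = lin S (ind2 v w) y" using Suc(4) st by blast
  moreover have "ind2 v w q = 1" by (simp add: qq ind2_def)
  ultimately have "0 < lin S (ind2 v w) x" using q(2) by simp
  then obtain p' where p': "p' \<in> paths S" "0 < x p' * ind2 v w p'" using lin_witness by blast
  obtain a where pp': "p' = (a,v,w)" and a: "a \<in> states S" "0 < x p'"
    using p' by (cases p') (auto simp: ind2_def split: if_splits)
  have "\<exists>x'. reach (BB S) x x' \<and> cont_table S x' \<and> 1 \<le> x' q \<and>
     (\<forall>i\<in>states S. \<forall>j\<in>states S. lin S (ind1 i j) x' = lin S (ind1 i j) x \<and> lin S (ind2 i j) x' = lin S (ind2 i j) x)"
  proof (cases "1 \<le> x q")
    case True then show ?thesis using Suc(2) xn by (intro exI[of _ x]) (auto intro: reach.rrefl)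
  next
    case False
    then have cw: "c \<noteq> w" and au: "a \<noteq> u" using c a pp pp' qq by auto
    define z0 where "z0 = (\<lambda>s. e (u,v,c) s + e (a,v,w) s - e (swap_path 2 (u,v,c) (a,v,w)) s - e (swap_path 2 (a,v,w) (u,v,c)) s)"
    have z0c: "z0 \<in> crossing_swaps S" unfolding z0_def crossing_swaps_def mem_Collect_eq
      apply (rule exI[of _ "(u,v,c)"], rule exI[of _ "(a,v,w)"], rule exI[of _ 2])
      using p(1) pp p'(1) pp' by simp
    have sw: "swap_path 2 (u,v,c) (a,v,w) = (u,v,w)" "swap_path 2 (a,v,w) (u,v,c) = (a,v,c)"
      by (auto simp: swap_path_def)
    define z where "z = (\<lambda>s. - z0 s)"
    have zB: "z \<in> BB S" unfolding BB_def z_def using z0c by blast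
    define x' where "x' = (\<lambda>s. x s + z s)"
    have x'e: "x' s = x s - e (u,v,c) s - e (a,v,w) s + e (u,v,w) s + e (a,v,c) s" for s
      unfolding x'_def z_def z0_def sw by simp
    have x'n: "\<forall>s. 0 \<le> x s + z s"
    proof
      fix s
      have "x s + z s = x s - e (u,v,c) s - e (a,v,w) s + e (u,v,w) s + e (a,v,c) s"
        using x'e[of s] unfolding x'_def .
      moreover have "0 \<le> x s - e (u,v,c) s - e (a,v,w) s"
        using c a pp pp' cw xn[rule_format, of s] by (auto simp: e_def)
      ultimately show "0 \<le> x s + z s" using e_nonneg[of "(u,v,w)" s] e_nonneg[of "(a,v,c)" s] by linarith
    qed
    have r: "reach (BB S) x x'" unfolding x'_def by (rule reach_one[OF zB xn x'n])
    have lz: "lin S f z = - (f (u,v,c) + f (a,v,w) - f (u,v,w) - f (a,v,c))" for f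
      unfolding z_def z0_def sw lin_neg lin_diff lin_add
      using st a c by (simp add: lin_e)
    have supz: "supported S z" using crossing_is_move[OF z0c] unfolding is_move_def supported_def z_def by simp
    have cx': "cont_table S x'" using Suc(2) supz x'n unfolding cont_table_def supported_def x'_def by simp
    have q1: "1 \<le> x' q" unfolding x'e qq using cw au by (simp add: e_def xn)
    have "\<forall>i\<in>states S. \<forall>j\<in>states S. lin S (ind1 i j) x' = lin S (ind1 i j) x \<and> lin S (ind2 i j) x' = lin S (ind2 i j) x"
      unfolding x'_def lin_add lz by (simp add: ind1_def ind2_def)
    then show ?thesis using r cx' q1 by blast
  qed
  then obtain x' where x': "reach (BB S) x x'" "cont_table S x'" "1 \<le> x' q"
    "\<forall>i\<in>states S. \<forall>j\<in>states S. lin S (ind1 i j) x' = lin S (ind1 i j) x \<and> lin S (ind2 i j) x' = lin S (ind2 i j) x"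
    by blast
  define x0 where "x0 = (\<lambda>s. x' s - e q s)"
  define y0 where "y0 = (\<lambda>s. y s - e q s)"
  have cx0: "cont_table S x0" using x'(2,3) e_supported[OF q(1)]
    unfolding x0_def cont_table_def supported_def by (auto simp: e_def)
  have cy0: "cont_table S y0" using Suc(3) q(2) e_supported[OF q(1)]
    unfolding y0_def cont_table_def supported_def by (auto simp: e_def)
  have meq: "\<forall>i\<in>states S. \<forall>j\<in>states S. lin S (ind1 i j) x0 = lin S (ind1 i j) y0 \<and> lin S (ind2 i j) x0 = lin S (ind2 i j) y0"
    unfolding x0_def y0_def lin_diff using x'(4) Suc(4) by simp
  have "lin S (\<lambda>_. 1) x' = lin S (\<lambda>_. 1) x" using m_eq_deg[of S x' x] x'(4) by simp
  then have "lin S (\<lambda>_. 1) x0 = lin S (\<lambda>_. 1) x - 1" unfolding x0_def lin_diff lin_e[OF q(1)] by simp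
  then have "nat (lin S (\<lambda>_. 1) x0) = n" using Suc(5) by simp
  then have "reach (BB S) x0 y0" using Suc.IH cx0 cy0 meq by blast
  from reach_lift[OF this, of "e q"] have "reach (BB S) x' y"
    unfolding x0_def y0_def by (simp add: e_nonneg)
  then show ?case using x'(1) reach_trans by blast
qed



lemma pos_of_neg:
  fixes F :: "nat \<Rightarrow> int"
  assumes "finite A" "(\<Sum>a\<in>A. F a) = 0" "a0 \<in> A" "F a0 < 0"
  shows "\<exists>a\<in>A. 0 < F a"
proof (rule ccontr)
  assume "\<not> ?thesis"
  then have le: "\<forall>a\<in>A. F a \<le> 0" by auto
  have "(\<Sum>a\<in>A. F a) = F a0 + (\<Sum>a\<in>A - {a0}. F a)" using assms by (simp add: sum.remove)
  also have "\<dots> < 0" using le assms(4) sum_nonpos[of "A - {a0}" F] by auto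
  finally show False using assms(2) by simp
qed

lemma neg_of_pos:
  fixes F :: "nat \<Rightarrow> int"
  assumes "finite A" "(\<Sum>a\<in>A. F a) = 0" "a0 \<in> A" "0 < F a0"
  shows "\<exists>a\<in>A. F a < 0"
  using pos_of_neg[of A "\<lambda>a. - F a" a0] assms by (simp add: sum_negf)

lemma cycle_exists:
  fixes D :: "nat \<Rightarrow> nat \<Rightarrow> int" and A :: "nat set"
  assumes fin: "finite A"
    and row: "\<forall>i\<in>A. (\<Sum>j\<in>A. D i j) = 0"
    and col: "\<forall>j\<in>A. (\<Sum>i\<in>A. D i j) = 0"
    and nz: "p0 \<in> A" "q0 \<in> A" "D p0 q0 \<noteq> 0"
  shows "\<exists>m i j. 2 \<le> m \<and> m \<le> card A \<and> inj_on i {1..m} \<and> inj_on j {1..m} \<and>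
     i ` {1..m} \<subseteq> A \<and> j ` {1..m} \<subseteq> A \<and>
     (\<forall>l\<in>{1..m}. 0 < D (i l) (j l) \<and> D (i l) (j (sg m l)) < 0)"
proof -
  define Rm where "Rm = {r\<in>A. \<exists>c\<in>A. D r c < 0}"
  obtain r0 where r0: "r0 \<in> Rm"
  proof (cases "D p0 q0 < 0")
    case True then show ?thesis using nz that unfolding Rm_def by blast
  next
    case False then have "0 < D p0 q0" using nz by simp
    then obtain r where "r \<in> A" "D r q0 < 0"
      using neg_of_pos[of A "\<lambda>i. D i q0" p0] fin col nz by auto
    then show ?thesis using nz that unfolding Rm_def by blast
  qed
  define f where "f r = (SOME c. c \<in> A \<and> 0 < D r c)" for r
  define g where "g c = (SOME r. r \<in> A \<and> D r c < 0)" for c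
  define h where "h = g \<circ> f"
  have fP: "f r \<in> A \<and> 0 < D r (f r)" if "r \<in> Rm" for r
  proof -
    from that obtain c where "r \<in> A" "c \<in> A" "D r c < 0" unfolding Rm_def by blast
    then have "\<exists>c. c \<in> A \<and> 0 < D r c" using pos_of_neg[of A "D r" c] fin row by auto
    then show ?thesis unfolding f_def by (rule someI_ex)
  qed
  have gP: "g c \<in> A \<and> D (g c) c < 0" if "c \<in> A" "r \<in> A" "0 < D r c" for c r
  proof -
    have "\<exists>r. r \<in> A \<and> D r c < 0" using neg_of_pos[of A "\<lambda>i. D i c" r] fin col that by auto
    then show ?thesis unfolding g_def by (rule someI_ex)
  qed
  have hP: "h r \<in> Rm \<and> D (h r) (f r) < 0" if "r \<in> Rm" for r
  proof -
    have "r \<in> A" using that Rm_def by auto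
    then have "g (f r) \<in> A \<and> D (g (f r)) (f r) < 0" using gP fP[OF that] by blast
    then show ?thesis using fP[OF that] unfolding h_def Rm_def by auto
  qed
  have iter: "(h ^^ k) r0 \<in> Rm" for k
    by (induction k) (auto simp: r0 hP)
  have RmA: "Rm \<subseteq> A" unfolding Rm_def by auto
  have "\<not> inj_on (\<lambda>k. (h ^^ k) r0) {0..card A}"
  proof
    assume inj: "inj_on (\<lambda>k. (h ^^ k) r0) {0..card A}"
    have "(\<lambda>k. (h ^^ k) r0) ` {0..card A} \<subseteq> A" using iter RmA by auto
    then have "card ((\<lambda>k. (h ^^ k) r0) ` {0..card A}) \<le> card A" using fin by (simp add: card_mono)
    moreover have "card ((\<lambda>k. (h ^^ k) r0) ` {0..card A}) = card A + 1"
      using card_image[OF inj] by simp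
    ultimately show False by simp
  qed
  then obtain k1 k2 where k: "k1 < k2" "(h ^^ k1) r0 = (h ^^ k2) r0"
    unfolding inj_on_def by (metis linorder_neqE_nat)
  define r where "r = (h ^^ k1) r0"
  have rR: "r \<in> Rm" using iter r_def by simp
  have per: "(h ^^ (k2 - k1)) r = r"
  proof -
    have "(h ^^ (k2 - k1)) r = (h ^^ (k2 - k1 + k1)) r0" unfolding r_def by (simp only: funpow_add o_apply)
    also have "k2 - k1 + k1 = k2" using k by simp
    finally show ?thesis using k unfolding r_def by simp
  qed
  define m where "m = (LEAST p. 0 < p \<and> (h ^^ p) r = r)"
  have mP: "0 < m \<and> (h ^^ m) r = r" unfolding m_def
    by (rule LeastI[of _ "k2 - k1"]) (use k per in auto)
  have mmin: "\<not> (0 < p \<and> (h ^^ p) r = r)" if "p < m" for p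
    using not_less_Least[of p "\<lambda>p. 0 < p \<and> (h ^^ p) r = r"] that unfolding m_def by blast
  have hadd: "(h ^^ a) ((h ^^ b) r) = (h ^^ (a + b)) r" for a b
    by (simp add: funpow_add)
  have dist: "(h ^^ s) r \<noteq> (h ^^ t) r" if "s < t" "t \<le> m" "0 < s \<or> t < m" for s t
  proof
    assume eq: "(h ^^ s) r = (h ^^ t) r"
    have "(h ^^ (m - t + s)) r = (h ^^ (m - t)) ((h ^^ s) r)" by (simp add: hadd)
    also have "\<dots> = (h ^^ (m - t)) ((h ^^ t) r)" using eq by simp
    also have "\<dots> = (h ^^ m) r" using that by (simp add: hadd)
    also have "\<dots> = r" using mP by simp
    finally have "(h ^^ (m - t + s)) r = r" .
    moreover have "m - t + s < m" "0 < m - t + s" using that by linarith+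
    ultimately show False using mmin[of "m - t + s"] by blast
  qed
  define i where "i l = (h ^^ (l - 1)) r" for l
  define j where "j l = f (i l)" for l
  have iR: "i l \<in> Rm" for l
  proof -
    have "i l = (h ^^ (l - 1 + k1)) r0" unfolding i_def r_def by (simp only: funpow_add o_apply)
    then show ?thesis using iter by simp
  qed
  have hi: "h (i l) = (h ^^ l) r" if "1 \<le> l" for l
    unfolding i_def using that by (metis Suc_diff_le diff_Suc_1 funpow.simps(2) o_apply)
  have m2: "2 \<le> m"
  proof (rule ccontr)
    assume "\<not> 2 \<le> m"
    then have "m = 1" using mP by simp
    then have "h r = r" using mP by simp
    moreover have "0 < D r (f r)" "D (h r) (f r) < 0" using fP[OF rR] hP[OF rR] by auto
    ultimately show False by simp
  qed
  have inji: "inj_on i {1..m}"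
  proof (rule inj_onI)
    fix l l' assume l: "l \<in> {1..m}" "l' \<in> {1..m}" "i l = i l'"
    show "l = l'"
    proof (rule ccontr)
      assume "l \<noteq> l'"
      then have "l - 1 < l' - 1 \<or> l' - 1 < l - 1" using l by auto
      then consider "l - 1 < l' - 1" | "l' - 1 < l - 1" by blast
      then show False
      proof cases
        case 1
        have "l' - 1 \<le> m" "l' - 1 < m" using l by auto
        then show False using dist[of "l - 1" "l' - 1"] 1 l(3) unfolding i_def by blast
      next
        case 2
        have "l - 1 \<le> m" "l - 1 < m" using l by auto
        then show False using dist[of "l' - 1" "l - 1"] 2 l(3) unfolding i_def by metis
      qed
    qed
  qed
  have injj: "inj_on j {1..m}"
  proof (rule inj_onI)
    fix l l' assume l: "l \<in> {1..m}" "l' \<in> {1..m}" "j l = j l'"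
    then have e: "(h ^^ l) r = (h ^^ l') r" using hi[of l] hi[of l'] unfolding j_def h_def by auto
    show "l = l'"
    proof (rule ccontr)
      assume "l \<noteq> l'"
      then consider "l < l'" | "l' < l" by (meson linorder_neqE_nat)
      then show False
      proof cases
        case 1 then show False using dist[of l l'] l e by auto
      next
        case 2 then show False using dist[of l' l] l e by auto
      qed
    qed
  qed
  have iA: "i ` {1..m} \<subseteq> A" using iR RmA by auto
  have jA: "j ` {1..m} \<subseteq> A" using fP iR unfolding j_def by auto
  have mc: "m \<le> card A"
    using card_inj_on_le[OF inji iA fin] by simp
  have cyc: "0 < D (i l) (j l) \<and> D (i l) (j (sg m l)) < 0" if l: "l \<in> {1..m}" for l
  proof
    show "0 < D (i l) (j l)" using fP[OF iR] unfolding j_def by simp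
    show "D (i l) (j (sg m l)) < 0"
    proof (cases "l = 1")
      case True
      have "i l = h (i m)" using True hi[of m] mP m2 by (simp add: i_def)
      then show ?thesis using True hP[OF iR[of m]] unfolding j_def sg_def by simp
    next
      case False
      then have "1 \<le> l - 1" using l by auto
      then have "i l = h (i (l - 1))" using hi[of "l - 1"] unfolding i_def by simp
      then show ?thesis using False hP[OF iR[of "l - 1"]] unfolding j_def sg_def by simp
    qed
  qed
  show ?thesis using m2 mc inji injj iA jA cyc by blast
qed



lemma sum_ind_inj:
  assumes "finite L" "inj_on F L"
  shows "(\<Sum>l\<in>L. if F l = t then (1::int) else 0) = (if \<exists>l\<in>L. F l = t then 1 else 0)"
proof (cases "\<exists>l\<in>L. F l = t")
  case True
  then obtain l0 where l0: "l0 \<in> L" "F l0 = t" by blast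
  have "(\<Sum>l\<in>L. if F l = t then (1::int) else 0) = (\<Sum>l\<in>L. if l = l0 then 1 else 0)"
    using assms(2) l0 by (intro sum.cong refl) (auto simp: inj_on_def)
  also have "\<dots> = 1" using l0 assms(1) by simp
  finally show ?thesis using True by simp
next
  case False then show ?thesis by (intro trans[OF sum.neutral]) auto
qed

lemma perm_realize:
  fixes x :: table
  assumes m: "2 \<le> m" and inji: "inj_on i {1..m}" and injj: "inj_on j {1..m}"
    and ri: "i ` {1..m} \<subseteq> states S" and rj: "j ` {1..m} \<subseteq> states S"
    and ra: "\<alpha> ` {1..m} \<subseteq> states S" and rb: "\<beta> ` {1..m} \<subseteq> states S"
    and xa: "\<forall>l\<in>{1..m}. 0 < x (i l, j (sg m l), \<alpha> l)"
    and xb: "\<forall>l\<in>{1..m}. 0 < x (\<beta> l, i l, j l)"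
    and xn: "\<forall>v. 0 \<le> x v"
  shows "\<exists>a b. a ` {1..m} \<subseteq> states S \<and> b ` {1..m} \<subseteq> states S \<and> (\<forall>v. 0 \<le> x v + perm_move m i j a b v)"
proof -
  define L where "L = {1..m}"
  have finL: "finite L" by (simp add: L_def)
  have m1: "1 \<le> m" using m by simp
  define nx where "nx l = (if l = m then 1 else l + 1)" for l
  define a where "a l = \<alpha> (nx l)" for l
  have asg: "a (sg m l) = \<alpha> l" if "l \<in> L" for l
    using that m unfolding a_def nx_def sg_def L_def by auto
  have nxL: "nx l \<in> L" if "l \<in> L" for l using that m unfolding nx_def L_def by auto
  define P where "P l = (i l, j (sg m l), \<alpha> l)" for l
  define F where "F l = (\<beta> l, i l, j l)" for l
  define coll where "coll l \<longleftrightarrow> (\<exists>l'\<in>L. P l' = F l)" for l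
  define c where "c l = (SOME l'. l' \<in> L \<and> P l' = F l)" for l
  have cP: "c l \<in> L \<and> P (c l) = F l" if "coll l" for l
    using that unfolding coll_def c_def by (metis (mono_tags, lifting) someI_ex)
  define b where "b l = (if coll l then i (sg m (c l)) else \<beta> l)" for l
  have sgL: "sg m l \<in> L" if "l \<in> L" for l using sg_mem[OF m1] that L_def by auto
  have ra': "a ` L \<subseteq> states S" using ra nxL unfolding a_def L_def by auto
  have rb': "b ` L \<subseteq> states S"
  proof
    fix s assume "s \<in> b ` L"
    then obtain l where l: "l \<in> L" "s = b l" by blast
    show "s \<in> states S"
    proof (cases "coll l")
      case True then show ?thesis using l cP[OF True] sgL ri unfolding b_def L_def by auto
    next
      case False then show ?thesis using l rb unfolding b_def L_def by auto
    qed
  qed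
  define A where "A l = (i l, j l, a l)" for l
  have Qc: "(b l, i l, j l) = A (sg m (c l))" if "coll l" for l
  proof -
    have "P (c l) = F l" "c l \<in> L" using cP[OF that] by auto
    then have "j (sg m (c l)) = i l" "\<alpha> (c l) = j l" unfolding P_def F_def by auto
    then show ?thesis unfolding A_def b_def using that asg[OF \<open>c l \<in> L\<close>] by simp
  qed
  have injP: "inj_on P L"
  proof (rule inj_onI)
    fix l l' assume ll: "l \<in> L" "l' \<in> L" "P l = P l'"
    then have "i l = i l'" unfolding P_def by simp
    then show "l = l'" using inji ll unfolding L_def by (meson inj_onD)
  qed
  have injF: "inj_on F L"
  proof (rule inj_onI)
    fix l l' assume ll: "l \<in> L" "l' \<in> L" "F l = F l'"
    then have "i l = i l'" unfolding F_def by simp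
    then show "l = l'" using inji ll unfolding L_def by (meson inj_onD)
  qed
  have injsc: "inj_on (\<lambda>l. sg m (c l)) {l\<in>L. coll l}"
  proof (rule inj_onI)
    fix l l' assume l: "l \<in> {l\<in>L. coll l}" "l' \<in> {l\<in>L. coll l}" "sg m (c l) = sg m (c l')"
    have cl: "c l \<in> {1..m}" "c l' \<in> {1..m}" "coll l" "coll l'" "l \<in> L" "l' \<in> L" using cP l unfolding L_def by auto
    have "c l = c l'" using inj_onD[OF bij_betw_imp_inj_on[OF sg_bij[OF m1]] l(3) cl(1,2)] .
    then have "F l = F l'" using cP[OF cl(3)] cP[OF cl(4)] by simp
    then show "l = l'" using inj_onD[OF injF _ cl(5,6)] by simp
  qed
  have main: "0 \<le> x v + perm_move m i j a b v" for v
  proof -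
    define SA where "SA = (\<Sum>l\<in>L. e (A l) v)"
    define SB where "SB = (\<Sum>l\<in>L. e (b l, i l, j (sg m l)) v)"
    define SP where "SP = (\<Sum>l\<in>L. e (P l) v)"
    define SQ where "SQ = (\<Sum>l\<in>L. e (b l, i l, j l) v)"
    have Z: "perm_move m i j a b v = SA + SB - SP - SQ"
    proof -
      have "perm_move m i j a b v = (\<Sum>l\<in>L. e (A l) v + e (b l, i l, j (sg m l)) v - e (P l) v - e (b l, i l, j l) v)"
        unfolding perm_move_alt L_def[symmetric] A_def P_def using asg by (intro sum.cong refl) simp
      then show ?thesis unfolding SA_def SB_def SP_def SQ_def by (simp add: sum.distrib sum_subtractf)
    qed
    define SQC where "SQC = (\<Sum>l\<in>L. if coll l then e (b l, i l, j l) v else 0)"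
    define SQN where "SQN = (\<Sum>l\<in>L. if coll l then 0 else e (F l) v)"
    have SQ: "SQ = SQC + SQN" unfolding SQ_def SQC_def SQN_def sum.distrib[symmetric]
      by (intro sum.cong refl) (simp add: F_def b_def)
    have "SQC = (\<Sum>l\<in>{l\<in>L. coll l}. e (A (sg m (c l))) v)"
      unfolding SQC_def by (simp add: sum.inter_filter[OF finL, symmetric] Qc cong: if_cong)
    also have "\<dots> = (\<Sum>k\<in>(\<lambda>l. sg m (c l)) ` {l\<in>L. coll l}. e (A k) v)"
      using sum.reindex[OF injsc, of "\<lambda>k. e (A k) v"] by simp
    also have "\<dots> \<le> SA" unfolding SA_def
      by (rule sum_mono2[OF finL]) (use cP sgL in \<open>auto simp: e_nonneg\<close>)
    finally have SQC: "SQC \<le> SA" .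
    have SB0: "0 \<le> SB" unfolding SB_def by (rule sum_nonneg) (simp add: e_nonneg)
    have SP: "SP = (if \<exists>l\<in>L. P l = v then 1 else 0)"
      unfolding SP_def e_def using sum_ind_inj[OF finL injP, of v] by (simp add: eq_commute)
    have SQN: "SQN = (if \<exists>l\<in>{l\<in>L. \<not> coll l}. F l = v then 1 else 0)"
    proof -
      have "SQN = (\<Sum>l\<in>L. if \<not> coll l then (if F l = v then 1 else 0) else 0)"
        unfolding SQN_def e_def by (intro sum.cong refl) auto
      also have "\<dots> = (\<Sum>l\<in>{l\<in>L. \<not> coll l}. if F l = v then 1 else 0)"
        by (rule sum.inter_filter[OF finL, symmetric])
      also have "\<dots> = (if \<exists>l\<in>{l\<in>L. \<not> coll l}. F l = v then 1 else 0)"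
        by (rule sum_ind_inj) (use finL injF in \<open>auto intro: inj_on_subset\<close>)
      finally show ?thesis .
    qed
    have key: "0 \<le> x v - SP - SQN"
    proof (cases "\<exists>l\<in>L. P l = v")
      case True
      then obtain l where l: "l \<in> L" "P l = v" by blast
      have "\<not> (\<exists>l'\<in>{l\<in>L. \<not> coll l}. F l' = v)" using l unfolding coll_def by auto
      moreover have "0 < x v" using xa l unfolding P_def L_def by auto
      ultimately have "SQN = 0" "SP = 1" using True SP SQN by auto
      then show ?thesis using \<open>0 < x v\<close> by simp
    next
      case False
      show ?thesis
      proof (cases "\<exists>l'\<in>{l\<in>L. \<not> coll l}. F l' = v")
        case True
        then obtain l where l: "l \<in> L" "F l = v" by blast
        have "0 < x v" using xb l unfolding F_def L_def by auto
        then show ?thesis using True False SP SQN by simp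
      next
        case False2: False
        have "SQN = 0" "SP = 0" using False False2 SP SQN by auto
        then show ?thesis using xn by simp
      qed
    qed
    show ?thesis using Z SQ SQC SB0 key by linarith
  qed
  show ?thesis using ra' rb' main unfolding L_def by blast
qed



definition distA :: "nat \<Rightarrow> table \<Rightarrow> table \<Rightarrow> int" where
  "distA S y x = (\<Sum>p\<in>states S. \<Sum>q\<in>states S. \<bar>lin S (ind1 p q) y - lin S (ind1 p q) x\<bar>)"

lemma rowsum: "i \<in> states S \<Longrightarrow> (\<Sum>j\<in>states S. lin S (ind1 i j) x) = lin S (indI i) x"
  by (simp add: lin_fsum[symmetric] row_ind1 cong: lin_cong)

lemma colsum: "(\<Sum>i\<in>states S. lin S (ind1 i j) x) = (\<Sum>k\<in>states S. lin S (ind2 j k) x)"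
proof -
  have "(\<Sum>i\<in>states S. lin S (ind1 i j) x) = lin S (\<lambda>v. \<Sum>i\<in>states S. ind1 i j v) x"
    by (simp add: lin_fsum)
  also have "\<dots> = lin S (\<lambda>v. \<Sum>k\<in>states S. ind2 j k v) x"
    by (rule lin_cong) (simp add: col_ind)
  also have "\<dots> = (\<Sum>k\<in>states S. lin S (ind2 j k) x)" by (simp add: lin_fsum)
  finally show ?thesis .
qed

lemma card_states: "card (states S) = S" by (simp add: states_def)

lemma sg_neq: "2 \<le> m \<Longrightarrow> l \<in> {1..m} \<Longrightarrow> sg m l \<noteq> l"
  by (auto simp: sg_def)

lemma stepA:
  assumes cx: "cont_table S x" and cy: "cont_table S y" and ss: "same_stat S x y"
    and p0: "p0 \<in> states S" "q0 \<in> states S" "lin S (ind1 p0 q0) x \<noteq> lin S (ind1 p0 q0) y"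
  shows "\<exists>x''. reach (BB S) x x'' \<and> cont_table S x'' \<and> same_stat S x'' y \<and> distA S y x'' < distA S y x"
proof -
  have xn: "\<forall>v. 0 \<le> x v" and yn: "\<forall>v. 0 \<le> y v" using cx cy unfolding cont_table_def by auto
  have I: "\<forall>i\<in>states S. lin S (indI i) x = lin S (indI i) y"
   and T: "\<forall>i\<in>states S. \<forall>j\<in>states S. lin S (ind1 i j) x + lin S (ind2 i j) x = lin S (ind1 i j) y + lin S (ind2 i j) y"
    using ss unfolding same_stat_lin by auto
  define D where "D p q = lin S (ind1 p q) y - lin S (ind1 p q) x" for p q
  have row: "\<forall>i\<in>states S. (\<Sum>j\<in>states S. D i j) = 0"
    unfolding D_def by (simp add: sum_subtractf rowsum I)
  have col: "\<forall>j\<in>states S. (\<Sum>i\<in>states S. D i j) = 0"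
  proof
    fix j assume j: "j \<in> states S"
    have "(\<Sum>i\<in>states S. D i j) = (\<Sum>k\<in>states S. lin S (ind2 j k) y) - (\<Sum>k\<in>states S. lin S (ind2 j k) x)"
      unfolding D_def by (simp add: sum_subtractf colsum)
    also have "\<dots> = (\<Sum>k\<in>states S. lin S (ind2 j k) y - lin S (ind2 j k) x)" by (simp add: sum_subtractf)
    also have "\<dots> = (\<Sum>k\<in>states S. lin S (ind1 j k) x - lin S (ind1 j k) y)"
      using T j by (intro sum.cong refl) (simp add: algebra_simps)
    also have "\<dots> = 0" using I j by (simp add: sum_subtractf rowsum)
    finally show "(\<Sum>i\<in>states S. D i j) = 0" .
  qed
  have "D p0 q0 \<noteq> 0" using p0 unfolding D_def by simp
  from cycle_exists[OF states_fin row col p0(1,2) this]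
  obtain m i j where H: "2 \<le> m \<and> m \<le> card (states S) \<and> inj_on i {1..m} \<and> inj_on j {1..m} \<and>
     i ` {1..m} \<subseteq> states S \<and> j ` {1..m} \<subseteq> states S \<and>
     (\<forall>l\<in>{1..m}. 0 < D (i l) (j l) \<and> D (i l) (j (sg m l)) < 0)" by (elim exE) (rule that)
  then have m: "2 \<le> m" "m \<le> card (states S)" and inji: "inj_on i {1..m}" and injj: "inj_on j {1..m}"
    and ri: "i ` {1..m} \<subseteq> states S" and rj: "j ` {1..m} \<subseteq> states S"
    and cyc: "\<forall>l\<in>{1..m}. 0 < D (i l) (j l) \<and> D (i l) (j (sg m l)) < 0" by auto
  have m1: "1 \<le> m" using m by simp
  have exa: "\<exists>c. c \<in> states S \<and> 0 < x (i l, j (sg m l), c)" if l: "l \<in> {1..m}" for l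
  proof -
    have "0 \<le> lin S (ind1 (i l) (j (sg m l))) y" by (rule lin_nonneg) (auto simp: yn ind_nonneg)
    then have "0 < lin S (ind1 (i l) (j (sg m l))) x" using cyc l unfolding D_def by force
    then obtain v where v: "v \<in> paths S" "0 < x v * ind1 (i l) (j (sg m l)) v" using lin_witness by blast
    obtain a1 a2 a3 where vv: "v = (a1,a2,a3)" by (cases v) auto
    have "ind1 (i l) (j (sg m l)) v \<noteq> 0" using v(2) by auto
    then have "a1 = i l" "a2 = j (sg m l)" "ind1 (i l) (j (sg m l)) v = 1" unfolding vv ind1_def by (auto split: if_splits)
    then show ?thesis using v vv by auto
  qed
  have exb: "\<exists>c. c \<in> states S \<and> 0 < x (c, i l, j l)" if l: "l \<in> {1..m}" for l
  proof -
    have il: "i l \<in> states S" "j l \<in> states S" using l ri rj by auto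
    have "0 \<le> lin S (ind2 (i l) (j l)) y" by (rule lin_nonneg) (auto simp: yn ind_nonneg)
    moreover have "lin S (ind1 (i l) (j l)) x + lin S (ind2 (i l) (j l)) x = lin S (ind1 (i l) (j l)) y + lin S (ind2 (i l) (j l)) y"
      using T il by blast
    ultimately have "0 < lin S (ind2 (i l) (j l)) x" using cyc l unfolding D_def by force
    then obtain v where v: "v \<in> paths S" "0 < x v * ind2 (i l) (j l) v" using lin_witness by blast
    obtain a1 a2 a3 where vv: "v = (a1,a2,a3)" by (cases v) auto
    have "ind2 (i l) (j l) v \<noteq> 0" using v(2) by auto
    then have "a2 = i l" "a3 = j l" "ind2 (i l) (j l) v = 1" unfolding vv ind2_def by (auto split: if_splits)
    then show ?thesis using v vv by auto
  qed
  define \<alpha> where "\<alpha> l = (SOME c. c \<in> states S \<and> 0 < x (i l, j (sg m l), c))" for l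
  define \<beta> where "\<beta> l = (SOME c. c \<in> states S \<and> 0 < x (c, i l, j l))" for l
  have \<alpha>P: "\<alpha> l \<in> states S \<and> 0 < x (i l, j (sg m l), \<alpha> l)" if "l \<in> {1..m}" for l
    unfolding \<alpha>_def by (rule someI_ex[OF exa[OF that]])
  have \<beta>P: "\<beta> l \<in> states S \<and> 0 < x (\<beta> l, i l, j l)" if "l \<in> {1..m}" for l
    unfolding \<beta>_def by (rule someI_ex[OF exb[OF that]])
  obtain a b where ab: "a ` {1..m} \<subseteq> states S" "b ` {1..m} \<subseteq> states S"
    "\<forall>v. 0 \<le> x v + perm_move m i j a b v"
    using perm_realize[OF m(1) inji injj ri rj, of \<alpha> \<beta> x] \<alpha>P \<beta>P xn by blast
  define Z where "Z = perm_move m i j a b"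
  have ZP: "Z \<in> perm_moves S" unfolding Z_def perm_moves_def mem_Collect_eq
    apply (rule exI[of _ m], rule exI[of _ i], rule exI[of _ j], rule exI[of _ a], rule exI[of _ b])
    using m inji injj ri rj ab card_states by simp
  have ZB: "Z \<in> BB S" unfolding BB_def using ZP by blast
  have Zm: "is_move S Z" using perm_is_move[OF ZP] .
  define x'' where "x'' = (\<lambda>v. x v + Z v)"
  have r: "reach (BB S) x x''" unfolding x''_def using reach_one[OF ZB xn] ab(3) Z_def by simp
  have c'': "cont_table S x''" using cx Zm ab(3) unfolding x''_def cont_table_def is_move_def supported_def Z_def
    by simp
  have s'': "same_stat S x'' y" using ss Zm unfolding x''_def same_stat_lin is_move_lin lin_add
    by (simp add: algebra_simps)
  have injP1: "inj_on (\<lambda>l. (i l, j l)) {1..m}"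
    by (rule inj_onI) (use inji in \<open>auto dest: inj_onD\<close>)
  have injN1: "inj_on (\<lambda>l. (i l, j (sg m l))) {1..m}"
    by (rule inj_onI) (use inji in \<open>auto dest: inj_onD\<close>)
  have L1: "lin S (ind1 p q) Z = (if \<exists>l\<in>{1..m}. (i l, j l) = (p, q) then 1 else 0)
      - (if \<exists>l\<in>{1..m}. (i l, j (sg m l)) = (p, q) then 1 else 0)" for p q
  proof -
    have "lin S (ind1 p q) Z = (\<Sum>l\<in>{1..m}. (if (i l, j l) = (p, q) then 1 else 0) - (if (i l, j (sg m l)) = (p, q) then 1 else 0))"
      unfolding Z_def lin_perm[OF m1 ri rj ab(1,2)] by (intro sum.cong refl) (auto simp: ind1_def)
    also have "\<dots> = (\<Sum>l\<in>{1..m}. if (i l, j l) = (p, q) then 1 else 0) - (\<Sum>l\<in>{1..m}. if (i l, j (sg m l)) = (p, q) then 1 else 0)"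
      by (simp add: sum_subtractf)
    also have "\<dots> = (if \<exists>l\<in>{1..m}. (i l, j l) = (p, q) then 1 else 0)
      - (if \<exists>l\<in>{1..m}. (i l, j (sg m l)) = (p, q) then 1 else 0)"
      using sum_ind_inj[OF _ injP1, of "(p,q)"] sum_ind_inj[OF _ injN1, of "(p,q)"] by simp
    finally show ?thesis .
  qed
  have sgm: "sg m l \<in> {1..m}" if "l \<in> {1..m}" for l using sg_mem[OF m1 that] .
  have excl: False if "l \<in> {1..m}" "l' \<in> {1..m}" "(i l, j l) = (i l', j (sg m l'))" for l l'
  proof -
    have "l = l'" using inj_onD[OF inji _ that(1,2)] that(3) by simp
    then have "j l = j (sg m l)" using that(3) by simp
    then have "l = sg m l" using inj_onD[OF injj _ that(1) sgm[OF that(1)]] by simp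
    then show False using sg_neq[OF m(1) that(1)] by simp
  qed
  have pos: "\<bar>D p q - lin S (ind1 p q) Z\<bar> < \<bar>D p q\<bar>" if H: "\<exists>l\<in>{1..m}. (i l, j l) = (p, q)" for p q
  proof -
    obtain l where l: "l \<in> {1..m}" "(i l, j l) = (p, q)" using H by blast
    have "\<not> (\<exists>l'\<in>{1..m}. (i l', j (sg m l')) = (p, q))" using excl l by metis
    then have "lin S (ind1 p q) Z = 1" using L1 H by simp
    moreover have "0 < D p q" using cyc l by auto
    ultimately show ?thesis by simp
  qed
  have neg: "\<bar>D p q - lin S (ind1 p q) Z\<bar> < \<bar>D p q\<bar>" if H: "\<exists>l\<in>{1..m}. (i l, j (sg m l)) = (p, q)" for p q
  proof -
    obtain l where l: "l \<in> {1..m}" "(i l, j (sg m l)) = (p, q)" using H by blast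
    have "\<not> (\<exists>l'\<in>{1..m}. (i l', j l') = (p, q))" using excl l by metis
    then have "lin S (ind1 p q) Z = -1" using L1 H by simp
    moreover have "D p q < 0" using cyc l by auto
    ultimately show ?thesis by simp
  qed
  have pw: "\<bar>D p q - lin S (ind1 p q) Z\<bar> \<le> \<bar>D p q\<bar>" for p q
  proof (cases "(\<exists>l\<in>{1..m}. (i l, j l) = (p, q)) \<or> (\<exists>l\<in>{1..m}. (i l, j (sg m l)) = (p, q))")
    case True then show ?thesis using pos neg by (meson less_imp_le)
  next
    case False then have "lin S (ind1 p q) Z = 0" using L1 by simp
    then show ?thesis by simp
  qed
  have one: "(1::nat) \<in> {1..m}" using m1 by simp
  have st1: "i 1 \<in> states S" "j 1 \<in> states S" using ri rj one by auto
  have dx'': "distA S y x'' = (\<Sum>p\<in>states S. \<Sum>q\<in>states S. \<bar>D p q - lin S (ind1 p q) Z\<bar>)"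
    unfolding distA_def x''_def lin_add D_def by (simp add: algebra_simps)
  have dx: "distA S y x = (\<Sum>p\<in>states S. \<Sum>q\<in>states S. \<bar>D p q\<bar>)"
    unfolding distA_def D_def ..
  have "(\<Sum>p\<in>states S. \<Sum>q\<in>states S. \<bar>D p q - lin S (ind1 p q) Z\<bar>) < (\<Sum>p\<in>states S. \<Sum>q\<in>states S. \<bar>D p q\<bar>)"
  proof (rule sum_strict_mono_ex1[OF states_fin])
    show "\<forall>p\<in>states S. (\<Sum>q\<in>states S. \<bar>D p q - lin S (ind1 p q) Z\<bar>) \<le> (\<Sum>q\<in>states S. \<bar>D p q\<bar>)"
      using pw by (simp add: sum_mono)
    have "(\<Sum>q\<in>states S. \<bar>D (i 1) q - lin S (ind1 (i 1) q) Z\<bar>) < (\<Sum>q\<in>states S. \<bar>D (i 1) q\<bar>)"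
      by (rule sum_strict_mono_ex1[OF states_fin]) (use pw pos one st1 in blast)+
    then show "\<exists>p\<in>states S. (\<Sum>q\<in>states S. \<bar>D p q - lin S (ind1 p q) Z\<bar>) < (\<Sum>q\<in>states S. \<bar>D p q\<bar>)"
      using st1 by blast
  qed
  then have "distA S y x'' < distA S y x" using dx dx'' by simp
  then show ?thesis using r c'' s'' by blast
qed



lemma distA_nonneg: "0 \<le> distA S y x"
  unfolding distA_def by (intro sum_nonneg) simp

lemma stageA:
  "\<And>x. cont_table S x \<Longrightarrow> cont_table S y \<Longrightarrow> same_stat S x y \<Longrightarrow> nat (distA S y x) = n \<Longrightarrow>
   \<exists>x'. reach (BB S) x x' \<and> cont_table S x' \<and> same_stat S x' y \<and>
      (\<forall>p\<in>states S. \<forall>q\<in>states S. lin S (ind1 p q) x' = lin S (ind1 p q) y)"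
proof (induction n rule: less_induct)
  case (less n x)
  show ?case
  proof (cases "\<forall>p\<in>states S. \<forall>q\<in>states S. lin S (ind1 p q) x = lin S (ind1 p q) y")
    case True
    have "reach (BB S) x x" using less(2) unfolding cont_table_def by (intro reach.rrefl) simp
    then show ?thesis using True less by blast
  next
    case False
    then obtain p0 q0 where p0: "p0 \<in> states S" "q0 \<in> states S" "lin S (ind1 p0 q0) x \<noteq> lin S (ind1 p0 q0) y"
      by blast
    obtain x'' where x'': "reach (BB S) x x''" "cont_table S x''" "same_stat S x'' y" "distA S y x'' < distA S y x"
      using stepA[OF less(2,3,4) p0] by blast
    have "nat (distA S y x'') < n" using x''(4) less(5) distA_nonneg[of S y x''] by linarith
    then obtain x' where x': "reach (BB S) x'' x'" "cont_table S x'" "same_stat S x' y"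
      "\<forall>p\<in>states S. \<forall>q\<in>states S. lin S (ind1 p q) x' = lin S (ind1 p q) y"
      using less(1)[OF _ x''(2) less(3) x''(3) refl] by blast
    then show ?thesis using reach_trans[OF x''(1) x'(1)] by blast
  qed
qed

lemma connect:
  assumes cx: "cont_table S x" and cy: "cont_table S y" and ss: "same_stat S x y"
  shows "reach (BB S) x y"
proof -
  obtain x' where x': "reach (BB S) x x'" "cont_table S x'" "same_stat S x' y"
      "\<forall>p\<in>states S. \<forall>q\<in>states S. lin S (ind1 p q) x' = lin S (ind1 p q) y"
    using stageA[OF cx cy ss refl] by blast
  have T: "\<forall>i\<in>states S. \<forall>j\<in>states S. lin S (ind1 i j) x' + lin S (ind2 i j) x' = lin S (ind1 i j) y + lin S (ind2 i j) y"
    using x'(3) unfolding same_stat_lin by auto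
  have "\<forall>i\<in>states S. \<forall>j\<in>states S. lin S (ind1 i j) x' = lin S (ind1 i j) y \<and> lin S (ind2 i j) x' = lin S (ind2 i j) y"
    using T x'(4) by fastforce
  then have "reach (BB S) x' y" using stageB[OF x'(2) cy _ refl] by blast
  then show ?thesis using reach_trans[OF x'(1)] by blast
qed

theorem theorem2:
  fixes S :: nat
  assumes "2 \<le> S"
  shows "markov_basis S (crossing_swaps S \<union> perm_moves S)"
  unfolding markov_basis_def
proof (intro conjI allI impI)
  show "\<forall>z\<in>crossing_swaps S \<union> perm_moves S. is_move S z"
    using crossing_is_move perm_is_move by blast
  fix x y assume H: "cont_table S x \<and> cont_table S y \<and> same_stat S x y"
  then have "reach (BB S) x y" using connect by blast
  from reach_list[OF this] show "\<exists>zs. set zs \<subseteq> crossing_swaps S \<union> perm_moves S \<union> (\<lambda>z w. - z w) ` (crossing_swaps S \<union> perm_moves S) \<and>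
              (\<forall>w. y w = x w + (\<Sum>k<length zs. (zs ! k) w)) \<and>
              (\<forall>h\<le>length zs. \<forall>w. 0 \<le> x w + (\<Sum>k<h. (zs ! k) w))"
    unfolding BB_def .
qed

end
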